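(* Consider the discrete-time $Geo^X/G_r^{(a,b)}/1$ queue with single ($\delta=0$) or multiple ($\delta=1$) vacations described in the context, and let $p_{n,0}$, $p_{n,r}(u)$, $Q_n(u)$ be nonnegative numbers satisfying the stationary equations (E1)–(E8) and the normalization condition (N) given there. Then $$\tau:=\sum_{m=0}^{\infty}\sum_{r=a}^{b}p_{m,r}(1)+\sum_{m=0}^{\infty}Q_m(1)=\frac{1-(1-\delta)\sum_{n=0}^{a-1}p_{n,0}}{\omega},$$ where $$\omega=\sum_{n=0}^{a-1}\Big[p^+_nE(V)+\delta Q^+_nE(V)+(1-\delta)Q^+_n\Big\{\sum_{j=n}^{a-1}e_{j,n}\Big(\sum_{i=a}^{b}g_{i-j}s_i+\sum_{i=b+1-j}^{\infty}g_is_b\Big)\Big\}\Big]+\sum_{n=a}^{b}(p^+_n+Q^+_n)s_n+\sum_{n=b+1}^{\infty}(p^+_n+Q^+_n)s_b .$$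
   Context: Time is slotted. Fix integers $1\le a\le b$, a number $\lambda\in(0,1)$ with $\bar\lambda=1-\lambda$, and a group-size distribution $(g_m)_{m\ge1}$ ($g_m\ge0$, $\sum_m g_m=1$, finite mean $\bar g$, pgf $G(z)=\sum_{m\ge1}g_mz^m$); put $g_m=0$ for $m\le0$. In each slot a group of customers arrives with probability $\lambda$, its size having distribution $(g_m)$ (compound Bernoulli arrivals). Service is by the general bulk rule $(a,b)$: service starts only if at least $a$ customers wait; if $r$ wait with $a\le r\le b$ all are taken, if more than $b$ wait exactly $b$ are taken. The service time of a batch of size $r$ ($a\le r\le b$) has pmf $s_r(n)$, $n\ge1$, pgf $S_r^*(z)=\sum_{n\ge1}s_r(n)z^n$ and finite mean $s_r=\sum_n n s_r(n)$; $\mu_b=1/s_b$. Vacation times have pmf $v_n$, $n\ge1$, pgf $V^*(z)=\sum_{n\ge1}v_nz^n$ and finite mean $E(V)$. $\delta=0$ means single vacation (after a vacation, if fewer than $a$ customers wait, the server stays dormant until $a$ have accumulated), $\delta=1$ means multiple vacations (the server keeps taking vacations until at least $a$ wait). It is assumed $\rho=\lambda\bar g/(b\mu_b)<1$. Stationary probabilities: $p_{n,0}$ ($0\le n\le a-1$; server dormant, $n$ waiting), $p_{n,r}(u)$ ($n\ge0$, $a\le r\le b$, $u\ge1$; server busy with a batch of size $r$, $n$ waiting, remaining service time $u$), $Q_n(u)$ ($n\ge0$, $u\ge1$; server on vacation, $n$ waiting, remaining vacation time $u$). They satisfy: (E1) $p_{0,0}=(1-\delta)[\bar\lambda p_{0,0}+\bar\lambda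 Q_0(1)]$; (E2) $p_{n,0}=(1-\delta)[\bar\lambda p_{n,0}+\lambda\sum_{i=1}^ng_ip_{n-i,0}+\bar\lambda Q_n(1)+\lambda\sum_{i=1}^ng_iQ_{n-i}(1)]$, $1\le n\le a-1$; (E3) for $a\le r\le b$, $u\ge1$: $p_{0,r}(u)=\bar\lambda p_{0,r}(u+1)+s_r(u)\big[\sum_{m=a}^b\big(\bar\lambda p_{r,m}(1)+\lambda\sum_{i=1}^rg_ip_{r-i,m}(1)\big)+\bar\lambda Q_r(1)+\lambda\sum_{i=1}^rg_iQ_{r-i}(1)+(1-\delta)\lambda\sum_{i=0}^{a-1}g_{r-i}p_{i,0}\big]$; (E4) for $n\ge1$, $a\le r\le b-1$, $u\ge1$: $p_{n,r}(u)=\bar\lambda p_{n,r}(u+1)+\lambda\sum_{i=1}^ng_ip_{n-i,r}(u+1)$; (E5) for $n\ge1$, $u\ge1$: $p_{n,b}(u)=\bar\lambda p_{n,b}(u+1)+\lambda\sum_{i=1}^ng_ip_{n-i,b}(u+1)+s_b(u)\big[\sum_{m=a}^b\big(\bar\lambda p_{n+b,m}(1)+\lambda\sum_{i=1}^{n+b}g_ip_{n+b-i,m}(1)\big)+\bar\lambda Q_{n+b}(1)+\lambda\sum_{i=1}^{n+b}g_iQ_{n+b-i}(1)+(1-\delta)\lambda\sum_{i=0}^{a-1}g_{n+b-i}p_{i,0}\big]$; (E6) $Q_0(u)=\bar\lambda Q_0(u+1)+\bar\lambda\big(\sum_{m=a}^bp_{0,m}(1)+\delta Q_0(1)\big)v_u$;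 (E7) for $1\le n\le a-1$: $Q_n(u)=\bar\lambda Q_n(u+1)+\lambda\sum_{i=1}^ng_iQ_{n-i}(u+1)+v_u\big[\bar\lambda\big(\sum_{m=a}^bp_{n,m}(1)+\delta Q_n(1)\big)+\lambda\sum_{i=1}^ng_i\big(\sum_{m=a}^bp_{n-i,m}(1)+\delta Q_{n-i}(1)\big)\big]$; (E8) for $n\ge a$: $Q_n(u)=\bar\lambda Q_n(u+1)+\lambda\sum_{i=1}^ng_iQ_{n-i}(u+1)$; (N) $(1-\delta)\sum_{n=0}^{a-1}p_{n,0}+\sum_{n\ge0}\sum_{r=a}^b\sum_{u\ge1}p_{n,r}(u)+\sum_{n\ge0}\sum_{u\ge1}Q_n(u)=1$. Probabilities at service-completion / vacation-termination epochs: with $\tau$ as in the claim, $p^+_{0,r}=\tau^{-1}\bar\lambda p_{0,r}(1)$, $p^+_{n,r}=\tau^{-1}(\bar\lambda p_{n,r}(1)+\lambda\sum_{i=1}^ng_ip_{n-i,r}(1))$ for $n\ge1$, $a\le r\le b$; $p^+_n=\sum_{r=a}^bp^+_{n,r}$; $Q^+_0=\tau^{-1}\bar\lambda Q_0(1)$, $Q^+_n=\tau^{-1}(\bar\lambda Q_n(1)+\lambda\sum_{i=1}^ng_iQ_{n-i}(1))$ for $n\ge1$. The numbers $e_{n,i}$ ($0\le i\le n$) are defined by $e_{n,n}=1$, $e_{n,n-1}=g_1$, and $e_{n,i}=\sum_{j=i+1}^{n-1}e_{n,j}g_{j-i}+g_{n-i}$ for $0\le i\le n-2$. *)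

theory Defs
  imports "HOL-Analysis.Analysis"
begin

text \<open>The case i = n-1 coincides with the general recursion (empty sum plus g_1).
  Values for i > n are irrelevant and set to 0.\<close>

function e_coef :: "(nat \<Rightarrow> real) \<Rightarrow> nat \<Rightarrow> nat \<Rightarrow> real" where
  "e_coef g n i =
     (if n < i then 0
      else if i = n then 1
      else (\<Sum>j\<in>{i+1..<n}. e_coef g n j * g (j - i)) + g (n - i))"
  by pat_completeness auto
termination
  by (relation "Wellfounded.measure (\<lambda>(g, n, i). n - i)") auto

definition mean_of :: "(nat \<Rightarrow> real) \<Rightarrow> real" where
  "mean_of f = (\<Sum>n. real n * f n)"

definition tau_of :: "nat \<Rightarrow> nat \<Rightarrow> (nat \<Rightarrow> nat \<Rightarrow> nat \<Rightarrow> real) \<Rightarrow> (nat \<Rightarrow> nat \<Rightarrow> real) \<Rightarrow> real" where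
  "tau_of a b p Q = (\<Sum>m. \<Sum>r=a..b. p m r 1) + (\<Sum>m. Q m 1)"

text \<open>p^+_n = sum_{r=a}^b p^+_{n,r}; for n = 0 the inner sum over i is empty,
  so the single formula covers both cases of the paper.\<close>
definition pplus :: "nat \<Rightarrow> nat \<Rightarrow> real \<Rightarrow> (nat \<Rightarrow> real) \<Rightarrow> real \<Rightarrow> (nat \<Rightarrow> nat \<Rightarrow> nat \<Rightarrow> real) \<Rightarrow> nat \<Rightarrow> real" where
  "pplus a b lam g \<tau> p n = (\<Sum>r=a..b. (1 / \<tau>) *
      ((1 - lam) * p n r 1 + lam * (\<Sum>i=1..n. g i * p (n - i) r 1)))"

definition Qplus :: "real \<Rightarrow> (nat \<Rightarrow> real) \<Rightarrow> real \<Rightarrow> (nat \<Rightarrow> nat \<Rightarrow> real) \<Rightarrow> nat \<Rightarrow> real" where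
  "Qplus lam g \<tau> Q n = (1 / \<tau>) * ((1 - lam) * Q n 1 + lam * (\<Sum>i=1..n. g i * Q (n - i) 1))"

definition omega_of :: "nat \<Rightarrow> nat \<Rightarrow> real \<Rightarrow> real \<Rightarrow> (nat \<Rightarrow> real) \<Rightarrow> (nat \<Rightarrow> nat \<Rightarrow> real)
    \<Rightarrow> (nat \<Rightarrow> real) \<Rightarrow> (nat \<Rightarrow> nat \<Rightarrow> nat \<Rightarrow> real) \<Rightarrow> (nat \<Rightarrow> nat \<Rightarrow> real) \<Rightarrow> real" where
  "omega_of a b lam \<delta> g s v p Q =
    (let \<tau> = tau_of a b p Q; EV = mean_of v; sm = (\<lambda>r. mean_of (s r));
         pp = pplus a b lam g \<tau> p; qp = Qplus lam g \<tau> Q in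
     (\<Sum>n=0..a-1.
        pp n * EV + \<delta> * qp n * EV
        + (1 - \<delta>) * qp n *
            (\<Sum>j=n..a-1. e_coef g j n *
               ((\<Sum>i=a..b. g (i - j) * sm i) + (\<Sum>k. g (k + (b + 1 - j)) * sm b))))
     + (\<Sum>n=a..b. (pp n + qp n) * sm n)
     + (\<Sum>k. (pp (k + (b + 1)) + qp (k + (b + 1))) * sm b))"

end

theory Submission
  imports Defs
begin
declare e_coef.simps[simp del]


lemma L2:
  fixes F :: "nat \<Rightarrow> nat \<Rightarrow> real"
  assumes h: "((\<lambda>(n,u). F n u) has_sum S) (UNIV \<times> {1..})"
  shows "\<And>u. 1 \<le> u \<Longrightarrow> summable (\<lambda>n. F n u)"
    and "(\<lambda>u. suminf (\<lambda>n. F n (Suc u))) sums S"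
proof -
  have sw: "((\<lambda>(u,n). F n u) has_sum S) ({1..} \<times> UNIV)"
    using has_sum_swap[where f="\<lambda>(n,u). F n u" and S=S and A=UNIV and B="{1..}"] h by simp
  have sm: "(\<lambda>n. F n u) summable_on UNIV" if "u \<in> {1..}" for u
    using summable_on_SigmaD1[of "\<lambda>u n. F n u" "{1..}" "\<lambda>_. UNIV", OF _ that] sw
    by (auto simp: summable_on_def)
  have hs: "((\<lambda>n. F n u) has_sum suminf (\<lambda>n. F n u)) UNIV" if "u \<in> {1..}" for u
  proof -
    have "((\<lambda>n. F n u) has_sum infsum (\<lambda>n. F n u) UNIV) UNIV" using sm[OF that] by simp
    moreover have "(\<lambda>n. F n u) sums infsum (\<lambda>n. F n u) UNIV" using has_sum_imp_sums calculation by blast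
    ultimately show ?thesis using sums_unique by metis
  qed
  show "summable (\<lambda>n. F n u)" if "1 \<le> u" for u
    using sm[of u] that summable_on_imp_summable by auto
  have "((\<lambda>u. suminf (\<lambda>n. F n u)) has_sum S) {1..}"
    using has_sum_Sigma'[where f="\<lambda>(u,n). F n u" and a=S and A="{1..}" and B="\<lambda>_. UNIV" and b="\<lambda>u. suminf (\<lambda>n. F n u)"] sw hs
    by auto
  moreover have "bij_betw Suc UNIV {1::nat..}"
    by (rule bij_betwI[of _ _ _ "\<lambda>n. n - 1"]) auto
  ultimately have "((\<lambda>u. suminf (\<lambda>n. F n (Suc u))) has_sum S) UNIV"
    using has_sum_reindex_bij_betw[of Suc UNIV "{1..}" "\<lambda>u. suminf (\<lambda>n. F n u)" S] by simp
  then show "(\<lambda>u. suminf (\<lambda>n. F n (Suc u))) sums S" by (rule has_sum_imp_sums)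
qed

lemma L3:
  fixes F :: "nat \<Rightarrow> nat \<Rightarrow> nat \<Rightarrow> real"
  assumes h: "((\<lambda>(n,r,u). F n r u) has_sum S) (UNIV \<times> R \<times> {1..})" and fin: "finite R"
  shows "\<exists>W. (\<forall>r\<in>R. ((\<lambda>(n,u). F n r u) has_sum W r) (UNIV \<times> {1..})) \<and> S = sum W R"
proof -
  have bij: "bij_betw (\<lambda>(r,n,u). (n,r,u)) (R \<times> (UNIV \<times> {1..})) (UNIV \<times> R \<times> {1..})"
    by (rule bij_betwI[of _ _ _ "\<lambda>(n,r,u). (r,n,u)"]) auto
  have h2: "((\<lambda>(r,n,u). F n r u) has_sum S) (R \<times> (UNIV \<times> {1..}))"
    using has_sum_reindex_bij_betw[OF bij, of "\<lambda>(n,r,u). F n r u" S] h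
    by (simp add: case_prod_unfold)
  have sm: "(\<lambda>(n,u). F n r u) summable_on (UNIV \<times> {1..})" if "r \<in> R" for r
    using summable_on_SigmaD1[of "\<lambda>r (n,u). F n r u" R "\<lambda>_. UNIV \<times> {1..}", OF _ that] h2
    by (auto simp: summable_on_def case_prod_unfold)
  define W where "W r = infsum (\<lambda>(n,u). F n r u) (UNIV \<times> {1..})" for r
  have hs: "((\<lambda>(n,u). F n r u) has_sum W r) (UNIV \<times> {1..})" if "r \<in> R" for r
    using sm[OF that] W_def by simp
  have "(W has_sum S) R"
    using has_sum_Sigma'[where f="\<lambda>(r,nu). case nu of (n,u) \<Rightarrow> F n r u" and a=S and A=R and B="\<lambda>_. UNIV \<times> {1..}" and b=W] h2 hs
    by (auto simp: case_prod_unfold)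
  then have "S = sum W R" using fin has_sum_unique has_sum_finite by blast
  with hs show ?thesis by blast
qed



lemma tele:
  fixes f s :: "nat \<Rightarrow> real" and B :: real
  assumes nn: "\<And>u. 1 \<le> u \<Longrightarrow> 0 \<le> f u"
    and sf: "summable (\<lambda>u. f (Suc u))"
    and rec: "\<And>u. 1 \<le> u \<Longrightarrow> f u = f (Suc u) + s u * B"
    and s0: "s 0 = 0"
    and sm: "summable (\<lambda>n. real n * s n)"
  shows "(\<lambda>u. f (Suc u)) sums (B * (\<Sum>n. real n * s n))"
proof -
  have ps: "(\<Sum>u<N. f (Suc u)) = B * (\<Sum>n<Suc N. real n * s n) + real N * f (Suc N)" for N
  proof (induction N)
    case 0 then show ?case using s0 by simp
  next
    case (Suc N)
    have "(\<Sum>u<Suc N. f (Suc u)) = B * (\<Sum>n<Suc N. real n * s n) + real N * f (Suc N) + f (Suc N)"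
      using Suc by simp
    also have "\<dots> = B * (\<Sum>n<Suc N. real n * s n) + real (Suc N) * f (Suc N)" by (simp add: algebra_simps)
    also have "f (Suc N) = f (Suc (Suc N)) + s (Suc N) * B" using rec[of "Suc N"] by simp
    finally show ?case by (simp add: algebra_simps)
  qed
  define M where "M = (\<Sum>n. real n * s n)"
  define L where "L = (\<Sum>u. f (Suc u)) - B * M"
  have t1: "(\<lambda>N. \<Sum>u<N. f (Suc u)) \<longlonglongrightarrow> (\<Sum>u. f (Suc u))"
    using sf summable_LIMSEQ by blast
  have t2: "(\<lambda>N. \<Sum>n<Suc N. real n * s n) \<longlonglongrightarrow> M"
    using sm summable_LIMSEQ M_def LIMSEQ_Suc by blast
  have "(\<lambda>N. (\<Sum>u<N. f (Suc u)) - B * (\<Sum>n<Suc N. real n * s n)) \<longlonglongrightarrow> L"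
    unfolding L_def by (intro tendsto_intros t1 t2)
  then have lim: "(\<lambda>N. real N * f (Suc N)) \<longlonglongrightarrow> L" using ps by simp
  have "L \<ge> 0"
    by (rule LIMSEQ_le_const[OF lim]) (auto intro!: mult_nonneg_nonneg nn)
  have "L = 0"
  proof (rule ccontr)
    assume "L \<noteq> 0"
    with \<open>L \<ge> 0\<close> have Lp: "L > 0" by simp
    then have "eventually (\<lambda>N. real N * f (Suc N) > L / 2) sequentially"
      using order_tendstoD(1)[OF lim, of "L/2"] Lp by simp
    moreover have "eventually (\<lambda>N. N \<ge> 1) sequentially" by (simp add: eventually_ge_at_top)
    ultimately have ev: "eventually (\<lambda>N. norm (inverse (real N)) \<le> (2 / L) * f (Suc N)) sequentially"
    proof eventually_elim
      case (elim N)
      then have "real N > 0" by simp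
      with elim(1) Lp have "1 / real N < (2 / L) * f (Suc N)"
        by (simp add: field_simps)
      then show ?case by (simp add: field_simps)
    qed
    have "summable (\<lambda>N. (2 / L) * f (Suc N))" using sf by (rule summable_mult)
    with ev have "summable (\<lambda>N. inverse (real N))" by (rule summable_comparison_test_ev)
    then show False using not_summable_harmonic[where 'a=real] by simp
  qed
  then have "(\<Sum>u. f (Suc u)) = B * M" using L_def by simp
  then show ?thesis using sf M_def by (simp add: sums_iff)
qed





lemma conv_sums:
  fixes x g :: "nat \<Rightarrow> real"
  assumes xn: "\<And>n. 0 \<le> x n" and sx: "summable x"
    and gn: "\<And>n. 0 \<le> g n" and g0: "g 0 = 0" and gs: "g sums 1"
  shows "(\<lambda>n. \<Sum>i=1..n. g i * x (n - i)) sums (suminf x)"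
proof -
  have "(\<lambda>k. \<Sum>i\<le>k. g i * x (k - i)) sums ((\<Sum>k. g k) * (\<Sum>k. x k))"
    by (rule Cauchy_product_sums) (use gs sx gn xn in \<open>auto simp: sums_iff\<close>)
  moreover have "(\<Sum>i\<le>k. g i * x (k - i)) = (\<Sum>i=1..k. g i * x (k - i))" for k
    by (simp add: atMost_atLeast0 sum.atLeast_Suc_atMost g0)
  ultimately show ?thesis using gs by (simp add: sums_iff)
qed

lemma tri_swap1:
  fixes F :: "nat \<Rightarrow> nat \<Rightarrow> real"
  shows "(\<Sum>i=1..j. \<Sum>n=0..j-i. F i n) = (\<Sum>n=0..j. \<Sum>i=1..j-n. F i n)"
proof -
  have "(\<Sum>i=1..j. \<Sum>n=0..j-i. F i n) = (\<Sum>i\<in>{1..j}. \<Sum>n\<in>{n. n \<in> {0..j} \<and> i + n \<le> j}. F i n)"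
    by (intro sum.cong refl) (auto intro!: sum.cong)
  also have "\<dots> = (\<Sum>n\<in>{0..j}. \<Sum>i\<in>{i. i \<in> {1..j} \<and> i + n \<le> j}. F i n)"
    by (rule sum.swap_restrict) auto
  also have "\<dots> = (\<Sum>n=0..j. \<Sum>i=1..j-n. F i n)"
    by (intro sum.cong refl) (auto intro!: sum.cong)
  finally show ?thesis .
qed

lemma tri_swap2:
  fixes F :: "nat \<Rightarrow> nat \<Rightarrow> real"
  shows "(\<Sum>i=0..m. \<Sum>n=0..i. F i n) = (\<Sum>n=0..m. \<Sum>i=n..m. F i n)"
proof -
  have "(\<Sum>i=0..m. \<Sum>n=0..i. F i n) = (\<Sum>i\<in>{0..m}. \<Sum>n\<in>{n. n \<in> {0..m} \<and> n \<le> i}. F i n)"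
    by (intro sum.cong refl) (auto intro!: sum.cong)
  also have "\<dots> = (\<Sum>n\<in>{0..m}. \<Sum>i\<in>{i. i \<in> {0..m} \<and> n \<le> i}. F i n)"
    by (rule sum.swap_restrict) auto
  also have "\<dots> = (\<Sum>n=0..m. \<Sum>i=n..m. F i n)"
    by (intro sum.cong refl) (auto intro!: sum.cong)
  finally show ?thesis .
qed

lemma e_shift:
  "e_coef g (n + m) n = (if m = 0 then 1 else (\<Sum>t\<in>{1..<m}. e_coef g (m - t) 0 * g t) + g m)"
proof (induction m arbitrary: n rule: less_induct)
  case (less m)
  show ?case
  proof (cases "m = 0")
    case True then show ?thesis by (subst e_coef.simps) simp
  next
    case False
    have "e_coef g (n + m) n = (\<Sum>j\<in>{n+1..<n+m}. e_coef g (n+m) j * g (j - n)) + g m"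
      using False by (subst e_coef.simps) simp
    also have "(\<Sum>j\<in>{n+1..<n+m}. e_coef g (n+m) j * g (j - n)) = (\<Sum>t\<in>{1..<m}. e_coef g (n+m) (n+t) * g t)"
      using sum.shift_bounds_nat_ivl[of "\<lambda>j. e_coef g (n+m) j * g (j - n)" 1 n m]
      by (simp add: add.commute)
    also have "\<dots> = (\<Sum>t\<in>{1..<m}. e_coef g (m - t) 0 * g t)"
    proof (intro sum.cong refl)
      fix t assume t: "t \<in> {1..<m}"
      have e1: "e_coef g ((n + t) + (m - t)) (n + t) = e_coef g (0 + (m - t)) 0"
        using less.IH[of "m - t" "n + t"] less.IH[of "m - t" 0] t by simp
      then show "e_coef g (n + m) (n + t) * g t = e_coef g (m - t) 0 * g t"
        using t by simp
    qed
    finally show ?thesis using False by simp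
  qed
qed

lemma e_c:
  assumes "n \<le> j"
  shows "e_coef g j n = e_coef g (j - n) 0"
  using e_shift[of g n "j - n"] e_shift[of g 0 "j - n"] assms by simp

lemma c_rec:
  assumes g0: "g 0 = 0" and m: "1 \<le> m"
  shows "e_coef g m 0 = (\<Sum>t=1..m. g t * e_coef g (m - t) 0)"
proof -
  have "e_coef g m 0 = (\<Sum>t\<in>{1..<m}. e_coef g (m - t) 0 * g t) + g m"
    using e_shift[of g 0 m] m by simp
  also have "\<dots> = (\<Sum>t\<in>{1..<m}. g t * e_coef g (m - t) 0) + g m * e_coef g (m - m) 0"
    using e_shift[of g 0 0] by (simp add: mult.commute)
  also have "\<dots> = (\<Sum>t=1..m. g t * e_coef g (m - t) 0)"
    using m by (simp add: sum.atLeastLessThan_Suc atLeastLessThanSuc_atLeastAtMost[symmetric])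
  finally show ?thesis .
qed

lemma renewal_solve:
  fixes x y g :: "nat \<Rightarrow> real"
  assumes g0: "g 0 = 0"
    and rec: "\<And>j. j \<le> K \<Longrightarrow> x j = (\<Sum>i=1..j. g i * x (j - i)) + y j"
  shows "j \<le> K \<Longrightarrow> x j = (\<Sum>n=0..j. e_coef g j n * y n)"
proof (induction j rule: less_induct)
  case (less j)
  have "x j = (\<Sum>i=1..j. g i * (\<Sum>n=0..j-i. e_coef g (j-i-n) 0 * y n)) + y j"
  proof -
    have "(\<Sum>i=1..j. g i * x (j - i)) = (\<Sum>i=1..j. g i * (\<Sum>n=0..j-i. e_coef g (j-i-n) 0 * y n))"
    proof (intro sum.cong refl)
      fix i assume i: "i \<in> {1..j}"
      have "x (j - i) = (\<Sum>n=0..j-i. e_coef g (j-i) n * y n)"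
        using less.IH[of "j - i"] less.prems i by auto
      also have "\<dots> = (\<Sum>n=0..j-i. e_coef g (j-i-n) 0 * y n)"
        by (intro sum.cong refl) (simp add: e_c[where j="j-i"])
      finally show "g i * x (j - i) = g i * (\<Sum>n=0..j-i. e_coef g (j-i-n) 0 * y n)" by simp
    qed
    then show ?thesis using rec[OF less.prems] by simp
  qed
  also have "(\<Sum>i=1..j. g i * (\<Sum>n=0..j-i. e_coef g (j-i-n) 0 * y n))
      = (\<Sum>n=0..j. \<Sum>i=1..j-n. g i * e_coef g (j-i-n) 0 * y n)"
    by (subst tri_swap1[symmetric]) (simp add: sum_distrib_left mult.assoc)
  also have "\<dots> = (\<Sum>n=0..j. (\<Sum>i=1..j-n. g i * e_coef g (j-n-i) 0) * y n)"
    by (intro sum.cong refl) (simp add: sum_distrib_left sum_distrib_right mult_ac add.commute)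
  also have "\<dots> = (\<Sum>n=0..j. (if n = j then 0 else e_coef g (j - n) 0) * y n)"
  proof (intro sum.cong refl)
    fix n assume n: "n \<in> {0..j}"
    show "(\<Sum>i=1..j-n. g i * e_coef g (j-n-i) 0) * y n = (if n = j then 0 else e_coef g (j - n) 0) * y n"
      using c_rec[of g "j - n", OF g0] n by auto
  qed
  finally have "x j = (\<Sum>n=0..j. (if n = j then 0 else e_coef g (j - n) 0) * y n) + y j" .
  also have "\<dots> = (\<Sum>n=0..j. e_coef g j n * y n)"
  proof -
    have ejj: "e_coef g j j = 1" by (subst e_coef.simps) simp
    have e00: "e_coef g 0 0 = 1" by (subst e_coef.simps) simp
    have "(\<Sum>n=0..j. e_coef g j n * y n) = (\<Sum>n=0..j. (if n = j then 0 else e_coef g (j - n) 0) * y n + (if n = j then y j else 0))"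
      by (intro sum.cong refl) (auto simp: e_c[where j=j] ejj e00)
    then have "(\<Sum>n=0..j. e_coef g j n * y n) = (\<Sum>n=0..j. (if n = j then 0 else e_coef g (j - n) 0) * y n) + y j"
      by (simp add: sum.distrib)
    then show ?thesis by simp
  qed
  finally show ?case .
qed


theorem lemma2:
  fixes a b :: nat
    and lam \<delta> :: real
    and g :: "nat \<Rightarrow> real"
    and s :: "nat \<Rightarrow> nat \<Rightarrow> real"
    and v :: "nat \<Rightarrow> real"
    and p0 :: "nat \<Rightarrow> real"
    and p :: "nat \<Rightarrow> nat \<Rightarrow> nat \<Rightarrow> real"
    and Q :: "nat \<Rightarrow> nat \<Rightarrow> real"
    and PB PQ :: real
  assumes ab: "1 \<le> a" "a \<le> b"
    and lam: "0 < lam" "lam < 1"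
    and delta: "\<delta> = 0 \<or> \<delta> = 1"
    and g_nonneg: "\<And>m. 0 \<le> g m" and g0: "g 0 = 0" and g_sum: "g sums 1"
    and g_mean: "summable (\<lambda>m. real m * g m)"
    and s_nonneg: "\<And>r n. a \<le> r \<Longrightarrow> r \<le> b \<Longrightarrow> 0 \<le> s r n"
    and s0: "\<And>r. a \<le> r \<Longrightarrow> r \<le> b \<Longrightarrow> s r 0 = 0"
    and s_sum: "\<And>r. a \<le> r \<Longrightarrow> r \<le> b \<Longrightarrow> s r sums 1"
    and s_mean: "\<And>r. a \<le> r \<Longrightarrow> r \<le> b \<Longrightarrow> summable (\<lambda>n. real n * s r n)"
    and v_nonneg: "\<And>n. 0 \<le> v n" and v0: "v 0 = 0" and v_sum: "v sums 1"
    and v_mean: "summable (\<lambda>n. real n * v n)"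
    and rho: "lam * mean_of g / (real b * (1 / mean_of (s b))) < 1"
    and p0_nonneg: "\<And>n. n \<le> a - 1 \<Longrightarrow> 0 \<le> p0 n"
    and p_nonneg: "\<And>n r u. a \<le> r \<Longrightarrow> r \<le> b \<Longrightarrow> 1 \<le> u \<Longrightarrow> 0 \<le> p n r u"
    and Q_nonneg: "\<And>n u. 1 \<le> u \<Longrightarrow> 0 \<le> Q n u"
    and E1: "p0 0 = (1 - \<delta>) * ((1 - lam) * p0 0 + (1 - lam) * Q 0 1)"
    and E2: "\<And>n. 1 \<le> n \<Longrightarrow> n \<le> a - 1 \<Longrightarrow>
       p0 n = (1 - \<delta>) * ((1 - lam) * p0 n + lam * (\<Sum>i=1..n. g i * p0 (n - i))
                + (1 - lam) * Q n 1 + lam * (\<Sum>i=1..n. g i * Q (n - i) 1))"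
    and E3: "\<And>r u. a \<le> r \<Longrightarrow> r \<le> b \<Longrightarrow> 1 \<le> u \<Longrightarrow>
       p 0 r u = (1 - lam) * p 0 r (u + 1)
         + s r u * ((\<Sum>m=a..b. (1 - lam) * p r m 1 + lam * (\<Sum>i=1..r. g i * p (r - i) m 1))
                    + (1 - lam) * Q r 1 + lam * (\<Sum>i=1..r. g i * Q (r - i) 1)
                    + (1 - \<delta>) * lam * (\<Sum>i=0..a-1. g (r - i) * p0 i))"
    and E4: "\<And>n r u. 1 \<le> n \<Longrightarrow> a \<le> r \<Longrightarrow> r \<le> b - 1 \<Longrightarrow> 1 \<le> u \<Longrightarrow>
       p n r u = (1 - lam) * p n r (u + 1) + lam * (\<Sum>i=1..n. g i * p (n - i) r (u + 1))"
    and E5: "\<And>n u. 1 \<le> n \<Longrightarrow> 1 \<le> u \<Longrightarrow>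
       p n b u = (1 - lam) * p n b (u + 1) + lam * (\<Sum>i=1..n. g i * p (n - i) b (u + 1))
         + s b u * ((\<Sum>m=a..b. (1 - lam) * p (n + b) m 1
                        + lam * (\<Sum>i=1..n+b. g i * p (n + b - i) m 1))
                    + (1 - lam) * Q (n + b) 1 + lam * (\<Sum>i=1..n+b. g i * Q (n + b - i) 1)
                    + (1 - \<delta>) * lam * (\<Sum>i=0..a-1. g (n + b - i) * p0 i))"
    and E6: "\<And>u. 1 \<le> u \<Longrightarrow>
       Q 0 u = (1 - lam) * Q 0 (u + 1) + (1 - lam) * ((\<Sum>m=a..b. p 0 m 1) + \<delta> * Q 0 1) * v u"
    and E7: "\<And>n u. 1 \<le> n \<Longrightarrow> n \<le> a - 1 \<Longrightarrow> 1 \<le> u \<Longrightarrow>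
       Q n u = (1 - lam) * Q n (u + 1) + lam * (\<Sum>i=1..n. g i * Q (n - i) (u + 1))
         + v u * ((1 - lam) * ((\<Sum>m=a..b. p n m 1) + \<delta> * Q n 1)
                  + lam * (\<Sum>i=1..n. g i * ((\<Sum>m=a..b. p (n - i) m 1) + \<delta> * Q (n - i) 1)))"
    and E8: "\<And>n u. a \<le> n \<Longrightarrow> 1 \<le> u \<Longrightarrow>
       Q n u = (1 - lam) * Q n (u + 1) + lam * (\<Sum>i=1..n. g i * Q (n - i) (u + 1))"
    and N_busy: "((\<lambda>(n, r, u). p n r u) has_sum PB) (UNIV \<times> {a..b} \<times> {1..})"
    and N_vac: "((\<lambda>(n, u). Q n u) has_sum PQ) (UNIV \<times> {1..})"
    and N: "(1 - \<delta>) * (\<Sum>n=0..a-1. p0 n) + PB + PQ = 1"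
  shows "tau_of a b p Q = (1 - (1 - \<delta>) * (\<Sum>n=0..a-1. p0 n)) / omega_of a b lam \<delta> g s v p Q"
proof -
  have d01: "0 \<le> 1 - \<delta>" "0 \<le> \<delta>" using delta by auto
  have l01: "0 \<le> 1 - lam" "0 \<le> lam" using lam by auto
  obtain W where W: "\<forall>r\<in>{a..b}. ((\<lambda>(n,u). p n r u) has_sum W r) (UNIV \<times> {1..})"
    and PBW: "PB = sum W {a..b}"
    using L3[OF N_busy] by auto
  define Pr where "Pr r u = (\<Sum>n. p n r u)" for r u
  have sP: "summable (\<lambda>n. p n r u)" if "a \<le> r" "r \<le> b" "1 \<le> u" for r u
    using L2(1)[of "\<lambda>n u. p n r u" "W r"] W that by auto
  have PrW: "(\<lambda>u. Pr r (Suc u)) sums W r" if "a \<le> r" "r \<le> b" for r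
    using L2(2)[of "\<lambda>n u. p n r u" "W r"] W that unfolding Pr_def by auto
  define Qs where "Qs u = (\<Sum>n. Q n u)" for u
  have sQ: "summable (\<lambda>n. Q n u)" if "1 \<le> u" for u
    using L2(1)[OF N_vac] that by auto
  have QsPQ: "(\<lambda>u. Qs (Suc u)) sums PQ"
    using L2(2)[OF N_vac] unfolding Qs_def by auto
  have cp: "(\<lambda>n. \<Sum>i=1..n. g i * p (n - i) m u) sums Pr m u" if "a \<le> m" "m \<le> b" "1 \<le> u" for m u
    unfolding Pr_def by (rule conv_sums) (use that sP p_nonneg g_nonneg g0 g_sum in auto)
  have cq: "(\<lambda>n. \<Sum>i=1..n. g i * Q (n - i) u) sums Qs u" if "1 \<le> u" for u
    unfolding Qs_def by (rule conv_sums) (use that sQ Q_nonneg g_nonneg g0 g_sum in auto)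
  define A where "A n = (\<Sum>m=a..b. (1 - lam) * p n m 1 + lam * (\<Sum>i=1..n. g i * p (n - i) m 1))" for n
  define Bq where "Bq n = (1 - lam) * Q n 1 + lam * (\<Sum>i=1..n. g i * Q (n - i) 1)" for n
  define Dm where "Dm n = (1 - \<delta>) * lam * (\<Sum>i=0..a-1. g (n - i) * p0 i)" for n
  define Br where "Br n = A n + Bq n + Dm n" for n
  have Ann: "0 \<le> A n" for n
    unfolding A_def using l01 p_nonneg g_nonneg
    by (intro sum_nonneg add_nonneg_nonneg mult_nonneg_nonneg) auto
  have Bqnn: "0 \<le> Bq n" for n
    unfolding Bq_def using l01 Q_nonneg g_nonneg
    by (intro sum_nonneg add_nonneg_nonneg mult_nonneg_nonneg) auto
  have Dmnn: "0 \<le> Dm n" for n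
    unfolding Dm_def using l01 d01 p0_nonneg g_nonneg
    by (intro sum_nonneg add_nonneg_nonneg mult_nonneg_nonneg) auto
  have Brnn: "0 \<le> Br n" for n
    unfolding Br_def using Ann Bqnn Dmnn by simp
  have sA: "summable A"
  proof -
    have "summable (\<lambda>n. (1 - lam) * p n m 1 + lam * (\<Sum>i=1..n. g i * p (n - i) m 1))"
      if "m \<in> {a..b}" for m
      using that sP[of m 1] cp[of m 1]
      by (intro summable_add summable_mult) (auto simp: sums_iff)
    then show ?thesis unfolding A_def by (rule summable_sum)
  qed
  have sBq: "summable Bq"
    unfolding Bq_def using sQ[of 1] cq[of 1]
    by (intro summable_add summable_mult) (auto simp: sums_iff)
  have sgs: "summable (\<lambda>k. g (k + c))" for c
    using g_sum summable_ignore_initial_segment[of g c] by (auto simp: sums_iff)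
  have sDm: "summable (\<lambda>k. Dm (k + c))" for c
  proof -
    have "summable (\<lambda>k. g (k + c - i) * p0 i)" if "i \<in> {0..a-1}" for i
    proof (cases "i \<le> c")
      case True
      have "summable (\<lambda>k. g (k + (c - i)) * p0 i)" by (intro summable_mult2 sgs)
      then show ?thesis using True by simp
    next
      case False
      have "summable (\<lambda>k. g (k + (i - c) + c - i) * p0 i)"
        using False sgs[of 0] by (auto intro: summable_mult2)
      then have "summable (\<lambda>k. g (k + c - i) * p0 i)"
        using summable_iff_shift[of "\<lambda>k. g (k + c - i) * p0 i" "i - c"] by simp
      then show ?thesis by simp
    qed
    then show ?thesis unfolding Dm_def
      by (intro summable_mult summable_sum) auto
  qed
  have brk: "Br r = (\<Sum>m=a..b. (1 - lam) * p r m 1 + lam * (\<Sum>i=1..r. g i * p (r - i) m 1))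
      + (1 - lam) * Q r 1 + lam * (\<Sum>i=1..r. g i * Q (r - i) 1)
      + (1 - \<delta>) * lam * (\<Sum>i=0..a-1. g (r - i) * p0 i)" for r
    unfolding Br_def A_def Bq_def Dm_def by simp
  have PrS: "(\<lambda>n. p n r u) sums Pr r u" if "a \<le> r" "r \<le> b" "1 \<le> u" for r u
    unfolding Pr_def using sP[OF that] by (rule summable_sums)
  have recP: "Pr r u = Pr r (Suc u) + s r u * Br r" if r: "a \<le> r" "r < b" and u: "1 \<le> u" for r u
  proof -
    have pw: "p n r u = (1 - lam) * p n r (Suc u) + lam * (\<Sum>i=1..n. g i * p (n - i) r (Suc u))
        + (if n = 0 then s r u * Br r else 0)" for n
    proof (cases "n = 0")
      case True then show ?thesis using E3[of r u] r u brk[of r] by simp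
    next
      case False then show ?thesis using E4[of n r u] r u by simp
    qed
    have "(\<lambda>n. (1 - lam) * p n r (Suc u) + lam * (\<Sum>i=1..n. g i * p (n - i) r (Suc u))
        + (if n = 0 then s r u * Br r else 0)) sums ((1 - lam) * Pr r (Suc u) + lam * Pr r (Suc u) + s r u * Br r)"
      by (intro sums_add sums_mult sums_single[of 0 "\<lambda>_. s r u * Br r"] cp PrS) (use r u in auto)
    then have "(\<lambda>n. p n r u) sums (Pr r (Suc u) + s r u * Br r)"
      by (subst (asm) pw[symmetric]) (simp add: algebra_simps)
    then show ?thesis using PrS[of r u] r u sums_unique2 by force
  qed
  have pwb: "p n b u = (1 - lam) * p n b (Suc u) + lam * (\<Sum>i=1..n. g i * p (n - i) b (Suc u))
        + s b u * Br (n + b)" if u: "1 \<le> u" for n u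
  proof (cases "n = 0")
    case True then show ?thesis using E3[of b u] ab u brk[of b] by simp
  next
    case False then show ?thesis using E5[of n u] u brk[of "n + b"] by simp
  qed
  obtain u0 where u0: "1 \<le> u0" "0 < s b u0"
  proof -
    have "\<exists>u0. 1 \<le> u0 \<and> 0 < s b u0"
    proof (rule ccontr)
      assume "\<not> ?thesis"
      then have "s b u = 0" for u
        using s0[of b] s_nonneg[of b u] ab by (cases "u = 0") (auto simp: not_less intro: order_antisym)
      then have "s b = (\<lambda>_. 0)" by auto
      then have "s b sums 0" by simp
      then show False using s_sum[of b] ab sums_unique2 by force
    qed
    then show ?thesis using that by blast
  qed
  have sBrb: "summable (\<lambda>n. Br (n + b))"
  proof (rule summable_comparison_test)
    show "summable (\<lambda>n. p n b u0 / s b u0)"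
      using sP[of b u0] ab u0 by (intro summable_divide) auto
    show "\<exists>N. \<forall>n\<ge>N. norm (Br (n + b)) \<le> p n b u0 / s b u0"
    proof (intro exI allI impI)
      fix n
      have "0 \<le> (1 - lam) * p n b (Suc u0) + lam * (\<Sum>i=1..n. g i * p (n - i) b (Suc u0))"
        using l01 p_nonneg g_nonneg ab
        by (intro sum_nonneg add_nonneg_nonneg mult_nonneg_nonneg) auto
      then have "s b u0 * Br (n + b) \<le> p n b u0" using pwb[of u0 n] u0 by simp
      then show "norm (Br (n + b)) \<le> p n b u0 / s b u0"
        using Brnn[of "n + b"] u0 by (simp add: pos_le_divide_eq mult.commute)
    qed
  qed
  have recPb: "Pr b u = Pr b (Suc u) + s b u * (\<Sum>n. Br (n + b))" if u: "1 \<le> u" for u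
  proof -
    have "(\<lambda>n. (1 - lam) * p n b (Suc u) + lam * (\<Sum>i=1..n. g i * p (n - i) b (Suc u))
        + s b u * Br (n + b)) sums ((1 - lam) * Pr b (Suc u) + lam * Pr b (Suc u) + s b u * (\<Sum>n. Br (n + b)))"
      by (intro sums_add sums_mult cp PrS summable_sums sBrb) (use ab u in auto)
    then have "(\<lambda>n. p n b u) sums (Pr b (Suc u) + s b u * (\<Sum>n. Br (n + b)))"
      by (subst (asm) pwb[OF u, symmetric]) (simp add: algebra_simps)
    then show ?thesis using PrS[of b u] ab u sums_unique2 by force
  qed
  have Prnn: "0 \<le> Pr r u" if "a \<le> r" "r \<le> b" "1 \<le> u" for r u
    unfolding Pr_def using that sP p_nonneg by (intro suminf_nonneg) auto
  have Wr: "W r = Br r * mean_of (s r)" if r: "a \<le> r" "r < b" for r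
  proof -
    have "(\<lambda>u. Pr r (Suc u)) sums (Br r * (\<Sum>n. real n * s r n))"
      using r by (intro tele[where f="Pr r"] Prnn sums_summable[OF PrW] recP s0 s_mean) auto
    then show ?thesis using PrW[of r] r sums_unique2 unfolding mean_of_def by force
  qed
  have Wb: "W b = (\<Sum>n. Br (n + b)) * mean_of (s b)"
  proof -
    have "(\<lambda>u. Pr b (Suc u)) sums ((\<Sum>n. Br (n + b)) * (\<Sum>n. real n * s b n))"
      using ab by (intro tele[where f="Pr b"] Prnn sums_summable[OF PrW] recPb s0 s_mean) auto
    then show ?thesis using PrW[of b] ab sums_unique2 unfolding mean_of_def by force
  qed
  have sBrb1: "summable (\<lambda>k. Br (k + (b + 1)))"
    using sBrb summable_iff_shift[of "\<lambda>n. Br (n + b)" 1] by simp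
  have Brsplit: "(\<Sum>n. Br (n + b)) = Br b + (\<Sum>k. Br (k + (b + 1)))"
    using suminf_split_head[OF sBrb] by simp
  have PB_eq: "PB = (\<Sum>r=a..b. Br r * mean_of (s r)) + (\<Sum>k. Br (k + (b + 1))) * mean_of (s b)"
  proof -
    have "PB = (\<Sum>r=a..<b. W r) + W b"
      using PBW ab by (simp add: atLeastLessThanSuc_atLeastAtMost[symmetric] sum.atLeastLessThan_Suc)
    also have "(\<Sum>r=a..<b. W r) = (\<Sum>r=a..<b. Br r * mean_of (s r))"
      using Wr by (intro sum.cong) auto
    finally show ?thesis using Wb Brsplit ab
      by (simp add: atLeastLessThanSuc_atLeastAtMost[symmetric] sum.atLeastLessThan_Suc algebra_simps)
  qed
  define Dv where "Dv n = A n + \<delta> * Bq n" for n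
  have Aalt: "A n = (1 - lam) * (\<Sum>m=a..b. p n m 1) + lam * (\<Sum>i=1..n. g i * (\<Sum>m=a..b. p (n - i) m 1))" for n
  proof -
    have "(\<Sum>m=a..b. lam * (\<Sum>i=1..n. g i * p (n - i) m 1)) = lam * (\<Sum>i=1..n. g i * (\<Sum>m=a..b. p (n - i) m 1))"
      by (simp add: sum_distrib_left sum.swap[of _ "{a..b}"])
    then show ?thesis unfolding A_def by (simp add: sum.distrib sum_distrib_left)
  qed
  have Qpw: "Q n u = (1 - lam) * Q n (Suc u) + lam * (\<Sum>i=1..n. g i * Q (n - i) (Suc u))
      + (if n \<in> {0..a-1} then v u * Dv n else 0)" if u: "1 \<le> u" for n u
  proof -
    consider "n = 0" | "1 \<le> n" "n \<le> a - 1" | "a \<le> n" by linarith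
    then show ?thesis
    proof cases
      case 1
      then show ?thesis using E6[OF u] by (simp add: Dv_def Aalt Bq_def algebra_simps)
    next
      case 2
      have "v u * ((1 - lam) * ((\<Sum>m=a..b. p n m 1) + \<delta> * Q n 1)
                  + lam * (\<Sum>i=1..n. g i * ((\<Sum>m=a..b. p (n - i) m 1) + \<delta> * Q (n - i) 1)))
            = v u * Dv n"
        by (simp add: Dv_def Aalt Bq_def algebra_simps sum.distrib sum_distrib_left)
      then show ?thesis using E7[OF 2 u] 2 by simp
    next
      case 3
      then show ?thesis using E8[OF 3 u] ab by simp
    qed
  qed
  have QsS: "(\<lambda>n. Q n u) sums Qs u" if "1 \<le> u" for u
    unfolding Qs_def using sQ[OF that] by (rule summable_sums)
  have recQ: "Qs u = Qs (Suc u) + v u * (\<Sum>n=0..a-1. Dv n)" if u: "1 \<le> u" for u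
  proof -
    have "(\<lambda>n. (1 - lam) * Q n (Suc u) + lam * (\<Sum>i=1..n. g i * Q (n - i) (Suc u))
      + (if n \<in> {0..a-1} then v u * Dv n else 0)) sums ((1 - lam) * Qs (Suc u) + lam * Qs (Suc u) + (\<Sum>n\<in>{0..a-1}. v u * Dv n))"
      by (intro sums_add sums_mult cq QsS sums_If_finite_set) auto
    then have "(\<lambda>n. Q n u) sums (Qs (Suc u) + v u * (\<Sum>n=0..a-1. Dv n))"
      by (subst (asm) Qpw[OF u, symmetric]) (simp add: algebra_simps sum_distrib_left)
    then show ?thesis using QsS[OF u] sums_unique2 by force
  qed
  have Qsnn: "0 \<le> Qs u" if "1 \<le> u" for u
    unfolding Qs_def using that sQ Q_nonneg by (intro suminf_nonneg) auto
  have PQ_eq: "PQ = (\<Sum>n=0..a-1. Dv n) * mean_of v"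
  proof -
    have "(\<lambda>u. Qs (Suc u)) sums ((\<Sum>n=0..a-1. Dv n) * (\<Sum>n. real n * v n))"
      by (intro tele[where f=Qs] Qsnn sums_summable[OF QsPQ] recQ v0 v_mean) auto
    then show ?thesis using QsPQ sums_unique2 unfolding mean_of_def by force
  qed
  have p0rel: "lam * p0 j = (\<Sum>n=0..j. e_coef g j n * Bq n)" if d0: "\<delta> = 0" and j: "j \<le> a - 1" for j
  proof (rule renewal_solve[where x="\<lambda>j. lam * p0 j" and K="a - 1" and g=g and y=Bq])
    show "g 0 = 0" by (rule g0)
    show "j \<le> a - 1" by (rule j)
  next
    fix j assume j: "j \<le> a - 1"
    show "lam * p0 j = (\<Sum>i=1..j. g i * (lam * p0 (j - i))) + Bq j"
    proof (cases "j = 0")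
      case True
      then show ?thesis using E1 d0 by (simp add: Bq_def algebra_simps)
    next
      case False
      then have "p0 j = (1 - lam) * p0 j + lam * (\<Sum>i=1..j. g i * p0 (j - i)) + Bq j"
        using E2[of j] j d0 by (simp add: Bq_def)
      then show ?thesis by (simp add: sum_distrib_left algebra_simps)
    qed
  qed
  have tau_eq: "tau_of a b p Q = (\<Sum>r=a..b. Pr r 1) + Qs 1"
    unfolding tau_of_def Pr_def Qs_def using sP by (subst suminf_sum) auto
  have tau_nn: "0 \<le> tau_of a b p Q"
    unfolding tau_eq using Prnn Qsnn by (intro add_nonneg_nonneg sum_nonneg) auto
  have tau_le: "tau_of a b p Q \<le> PB + PQ"
  proof -
    have "Pr r 1 \<le> W r" if "r \<in> {a..b}" for r
    proof -
      have "sum (\<lambda>u. Pr r (Suc u)) {0} \<le> (\<Sum>u. Pr r (Suc u))"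
        using that by (intro sum_le_suminf sums_summable[OF PrW] Prnn) auto
      then show ?thesis using PrW[of r] that sums_unique2 by (force simp: sums_iff)
    qed
    then have "(\<Sum>r=a..b. Pr r 1) \<le> PB" unfolding PBW by (rule sum_mono)
    moreover have "Qs 1 \<le> PQ"
    proof -
      have "sum (\<lambda>u. Qs (Suc u)) {0} \<le> (\<Sum>u. Qs (Suc u))"
        by (intro sum_le_suminf sums_summable[OF QsPQ] Qsnn) auto
      then show ?thesis using QsPQ by (simp add: sums_iff)
    qed
    ultimately show ?thesis unfolding tau_eq by simp
  qed
  define \<tau> where "\<tau> = tau_of a b p Q"
  define EV where "EV = mean_of v"
  define sm where "sm r = mean_of (s r)" for r
  define G where "G j = (\<Sum>i=a..b. g (i - j) * sm i) + (\<Sum>k. g (k + (b + 1 - j)) * sm b)" for j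
  define H where "H n = (\<Sum>j=n..a-1. e_coef g j n * G j)" for n
  have sAB: "summable (\<lambda>k. A (k + (b + 1)) + Bq (k + (b + 1)))"
    using summable_ignore_initial_segment[OF sA, of "b + 1"] summable_ignore_initial_segment[OF sBq, of "b + 1"]
    by (intro summable_add)
  have key: "(\<Sum>r=a..b. Dm r * sm r) + (\<Sum>k. Dm (k + (b + 1))) * sm b = (1 - \<delta>) * (\<Sum>n=0..a-1. Bq n * H n)"
  proof (cases "\<delta> = 1")
    case True then show ?thesis by (simp add: Dm_def)
  next
    case False
    then have d0: "\<delta> = 0" using delta by simp
    have s1: "(\<Sum>r=a..b. Dm r * sm r) = (\<Sum>i=0..a-1. lam * p0 i * (\<Sum>r=a..b. g (r - i) * sm r))"
      unfolding Dm_def d0 by (simp add: sum_distrib_left sum_distrib_right sum.swap[of _ "{a..b}"] mult_ac)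
    have s2: "(\<Sum>k. Dm (k + (b + 1))) = (\<Sum>i=0..a-1. lam * p0 i * (\<Sum>k. g (k + (b + 1 - i))))"
    proof -
      have "(\<Sum>k. Dm (k + (b + 1))) = (\<Sum>k. \<Sum>i=0..a-1. lam * p0 i * g (k + (b + 1 - i)))"
      proof (intro suminf_cong)
        fix k
        have "(\<Sum>i=0..a-1. g (k + (b + 1) - i) * p0 i) = (\<Sum>i=0..a-1. g (k + (b + 1 - i)) * p0 i)"
          using ab by (intro sum.cong refl) auto
        then show "Dm (k + (b + 1)) = (\<Sum>i=0..a-1. lam * p0 i * g (k + (b + 1 - i)))"
          unfolding Dm_def d0 by (simp add: sum_distrib_left mult_ac)
      qed
      also have "\<dots> = (\<Sum>i=0..a-1. \<Sum>k. lam * p0 i * g (k + (b + 1 - i)))"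
        by (intro suminf_sum summable_mult sgs)
      also have "\<dots> = (\<Sum>i=0..a-1. lam * p0 i * (\<Sum>k. g (k + (b + 1 - i))))"
        by (intro sum.cong refl suminf_mult sgs)
      finally show ?thesis .
    qed
    have "(\<Sum>r=a..b. Dm r * sm r) + (\<Sum>k. Dm (k + (b + 1))) * sm b = (\<Sum>i=0..a-1. lam * p0 i * G i)"
    proof -
      have "(\<Sum>k. g (k + (b + 1 - i))) * sm b = (\<Sum>k. g (k + (b + 1 - i)) * sm b)" for i
        by (intro suminf_mult2 sgs)
      note gg = this
      show ?thesis unfolding s1 s2 G_def gg[symmetric]
        by (simp add: sum_distrib_right sum_distrib_left sum.distrib distrib_left mult_ac)
    qed
    also have "\<dots> = (\<Sum>i=0..a-1. (\<Sum>n=0..i. e_coef g i n * Bq n) * G i)"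
      using p0rel[OF d0] by (intro sum.cong refl) auto
    also have "\<dots> = (\<Sum>i=0..a-1. \<Sum>n=0..i. e_coef g i n * Bq n * G i)"
      by (simp add: sum_distrib_right)
    also have "\<dots> = (\<Sum>n=0..a-1. \<Sum>i=n..a-1. e_coef g i n * Bq n * G i)"
      by (rule tri_swap2)
    also have "\<dots> = (\<Sum>n=0..a-1. Bq n * H n)"
      unfolding H_def by (simp add: sum_distrib_left mult_ac)
    finally show ?thesis using d0 by simp
  qed
  have sumPBPQ: "PB + PQ = (\<Sum>n=0..a-1. Dv n) * EV + (1 - \<delta>) * (\<Sum>n=0..a-1. Bq n * H n)
      + (\<Sum>n=a..b. (A n + Bq n) * sm n) + (\<Sum>k. A (k + (b + 1)) + Bq (k + (b + 1))) * sm b"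
  proof -
    have "(\<Sum>k. Br (k + (b + 1))) = (\<Sum>k. A (k + (b + 1)) + Bq (k + (b + 1))) + (\<Sum>k. Dm (k + (b + 1)))"
      unfolding Br_def using suminf_add[OF sAB sDm[of "b + 1"]] by simp
    then have "PB = (\<Sum>n=a..b. (A n + Bq n) * sm n) + (\<Sum>k. A (k + (b + 1)) + Bq (k + (b + 1))) * sm b
        + ((\<Sum>r=a..b. Dm r * sm r) + (\<Sum>k. Dm (k + (b + 1))) * sm b)"
      unfolding PB_eq sm_def[symmetric] Br_def by (simp add: algebra_simps sum.distrib)
    then show ?thesis unfolding key PQ_eq EV_def[symmetric] by simp
  qed
  show ?thesis
  proof (cases "\<tau> = 0")
    case True
    then show ?thesis unfolding \<tau>_def[symmetric]
      by (simp add: omega_of_def Let_def pplus_def Qplus_def \<tau>_def[symmetric])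
  next
    case False
    then have tp: "\<tau> > 0" using tau_nn \<tau>_def by simp
    have ppA: "pplus a b lam g \<tau> p n = A n / \<tau>" for n
      unfolding pplus_def A_def by (simp add: sum_divide_distrib)
    have qpB: "Qplus lam g \<tau> Q n = Bq n / \<tau>" for n
      unfolding Qplus_def Bq_def by simp
    have om1: "omega_of a b lam \<delta> g s v p Q =
        (\<Sum>n=0..a-1. A n / \<tau> * EV + \<delta> * (Bq n / \<tau>) * EV + (1 - \<delta>) * (Bq n / \<tau>) * H n)
        + (\<Sum>n=a..b. (A n / \<tau> + Bq n / \<tau>) * sm n)
        + (\<Sum>k. (A (k + (b + 1)) / \<tau> + Bq (k + (b + 1)) / \<tau>) * sm b)"
      unfolding omega_of_def Let_def \<tau>_def[symmetric] ppA qpB EV_def sm_def H_def G_def by simp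
    have t3: "(\<Sum>k. (A (k + (b + 1)) / \<tau> + Bq (k + (b + 1)) / \<tau>) * sm b)
        = (\<Sum>k. A (k + (b + 1)) + Bq (k + (b + 1))) * (sm b / \<tau>)"
      by (subst suminf_mult2[OF sAB]) (simp add: add_divide_distrib algebra_simps)
    have X1: "(\<Sum>n=0..a-1. A n / \<tau> * EV + \<delta> * (Bq n / \<tau>) * EV + (1 - \<delta>) * (Bq n / \<tau>) * H n) * \<tau>
        = (\<Sum>n=0..a-1. Dv n) * EV + (1 - \<delta>) * (\<Sum>n=0..a-1. Bq n * H n)"
    proof -
      have "(\<Sum>n=0..a-1. A n / \<tau> * EV + \<delta> * (Bq n / \<tau>) * EV + (1 - \<delta>) * (Bq n / \<tau>) * H n) * \<tau>
          = (\<Sum>n=0..a-1. Dv n * EV + (1 - \<delta>) * (Bq n * H n))"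
        unfolding sum_distrib_right using False
        by (intro sum.cong refl) (simp add: Dv_def field_simps)
      then show ?thesis by (simp add: sum.distrib sum_distrib_left sum_distrib_right)
    qed
    have X2: "(\<Sum>n=a..b. (A n / \<tau> + Bq n / \<tau>) * sm n) * \<tau> = (\<Sum>n=a..b. (A n + Bq n) * sm n)"
      unfolding sum_distrib_right using False
      by (intro sum.cong refl) (simp add: field_simps)
    have X3: "(\<Sum>k. A (k + (b + 1)) + Bq (k + (b + 1))) * (sm b / \<tau>) * \<tau> = (\<Sum>k. A (k + (b + 1)) + Bq (k + (b + 1))) * sm b"
      using False by simp
    have om0: "omega_of a b lam \<delta> g s v p Q * \<tau> = PB + PQ"
      unfolding om1 t3 sumPBPQ X1[symmetric] X2[symmetric] X3[symmetric] by (simp only: distrib_right)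
    then have om: "omega_of a b lam \<delta> g s v p Q = (PB + PQ) / \<tau>"
      using False by (simp add: field_simps)
    have "PB + PQ \<noteq> 0" using tau_le tp \<tau>_def by simp
    moreover have e: "1 - (1 - \<delta>) * (\<Sum>n=0..a-1. p0 n) = PB + PQ" using N by linarith
    ultimately show ?thesis unfolding \<tau>_def[symmetric] e om using tp by simp
  qed
qed

end
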